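(* Let $G$ be a graph with a vertex $r$ that belongs to every minimum vertex cover of $G$ (so $\mathrm{OPT}(G-r)+1=\mathrm{OPT}(G)$), and let $Y$ be a minimal blocking set of $G$. Then $Y$ is also a minimal blocking set of $G-r$.
   Context: $\mathrm{OPT}(G)$ is the minimum vertex cover size; minimum vertex covers have size $\mathrm{OPT}(G)$. $Y\subseteq V(G)$ is a blocking set if no minimum vertex cover contains $Y$; minimal if no proper subset is a blocking set. *)

theory Defs
  imports Main
begin

definition graph :: "'a set \<Rightarrow> 'a set set \<Rightarrow> bool" where
  "graph V E \<longleftrightarrow> finite V \<and> (\<forall>e\<in>E. e \<subseteq> V \<and> card e = 2)"

definition del_vert_V :: "'a set \<Rightarrow> 'a \<Rightarrow> 'a set" where
  "del_vert_V V r = V - {r}"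

definition del_vert_E :: "'a set set \<Rightarrow> 'a \<Rightarrow> 'a set set" where
  "del_vert_E E r = {e \<in> E. r \<notin> e}"

definition vertex_cover :: "'a set \<Rightarrow> 'a set set \<Rightarrow> 'a set \<Rightarrow> bool" where
  "vertex_cover V E C \<longleftrightarrow> C \<subseteq> V \<and> (\<forall>e\<in>E. e \<inter> C \<noteq> {})"

definition OPT :: "'a set \<Rightarrow> 'a set set \<Rightarrow> nat" where
  "OPT V E = Min {card C | C. vertex_cover V E C}"

definition min_vertex_cover :: "'a set \<Rightarrow> 'a set set \<Rightarrow> 'a set \<Rightarrow> bool" where
  "min_vertex_cover V E C \<longleftrightarrow> vertex_cover V E C \<and> card C = OPT V E"

definition blocking_set :: "'a set \<Rightarrow> 'a set set \<Rightarrow> 'a set \<Rightarrow> bool" where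
  "blocking_set V E Y \<longleftrightarrow> Y \<subseteq> V \<and> \<not> (\<exists>C. min_vertex_cover V E C \<and> Y \<subseteq> C)"

definition minimal_blocking_set :: "'a set \<Rightarrow> 'a set set \<Rightarrow> 'a set \<Rightarrow> bool" where
  "minimal_blocking_set V E Y \<longleftrightarrow> blocking_set V E Y \<and> (\<forall>Z. Z \<subset> Y \<longrightarrow> \<not> blocking_set V E Z)"

end

theory Submission
  imports Defs
begin

lemma opt_fin: assumes "finite V" shows "finite {card C | C. vertex_cover V E C}"
proof -
  have "{card C | C. vertex_cover V E C} \<subseteq> {0..card V}"
    using assms by (auto simp: vertex_cover_def intro: card_mono)
  thus ?thesis using finite_subset by blast
qed

lemma opt_le: assumes "finite V" "vertex_cover V E C" shows "OPT V E \<le> card C"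
  unfolding OPT_def using opt_fin[OF assms(1)] assms(2) by (intro Min_le) auto

lemma opt_ex: assumes "finite V" "vertex_cover V E C0" shows "\<exists>C. min_vertex_cover V E C"
proof -
  have ne: "{card C | C. vertex_cover V E C} \<noteq> {}" using assms by auto
  have "OPT V E \<in> {card C | C. vertex_cover V E C}"
    unfolding OPT_def using Min_in[OF opt_fin[OF assms(1)] ne] .
  thus ?thesis by (auto simp: min_vertex_cover_def)
qed

theorem mainTheorem19:
  fixes V :: "'a set" and E :: "'a set set" and r :: 'a and Y :: "'a set"
  assumes "graph V E"
    and "r \<in> V"
    and "\<forall>C. min_vertex_cover V E C \<longrightarrow> r \<in> C"
    and "minimal_blocking_set V E Y"
  shows "minimal_blocking_set (del_vert_V V r) (del_vert_E E r) Y"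
proof -
  let ?V = "del_vert_V V r" and ?E = "del_vert_E E r"
  have fin: "finite V" using assms(1) by (simp add: graph_def)
  have fin': "finite ?V" using fin by (simp add: del_vert_V_def)
  have "vertex_cover V E V" unfolding vertex_cover_def
  proof (intro conjI ballI)
    fix e assume "e \<in> E"
    hence "e \<subseteq> V" "card e = 2" using assms(1) by (auto simp: graph_def)
    thus "e \<inter> V \<noteq> {}" by (auto simp: Int_absorb2)
  qed simp
  then obtain C0 where C0: "min_vertex_cover V E C0" using opt_ex fin by blast
  have rC0: "r \<in> C0" using C0 assms(3) by blast
  have cov1: "vertex_cover ?V ?E (C - {r})" if "vertex_cover V E C" for C
    using that by (auto simp: vertex_cover_def del_vert_V_def del_vert_E_def)
  have cov2: "vertex_cover V E (C \<union> {r})" if "vertex_cover ?V ?E C" for C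
    using that assms(2) by (auto simp: vertex_cover_def del_vert_V_def del_vert_E_def)
  have finC: "finite C" if "vertex_cover V E C" for C
    using that fin by (auto simp: vertex_cover_def intro: finite_subset)
  have finC': "finite C" if "vertex_cover ?V ?E C" for C
    using that fin' by (auto simp: vertex_cover_def intro: finite_subset)
  have rnot: "r \<notin> C" if "vertex_cover ?V ?E C" for C
    using that by (auto simp: vertex_cover_def del_vert_V_def)
  have le1: "OPT ?V ?E + 1 \<le> OPT V E"
  proof -
    have "OPT ?V ?E \<le> card (C0 - {r})" using opt_le[OF fin' cov1] C0 min_vertex_cover_def by blast
    also have "\<dots> = card C0 - 1" using rC0 by simp
    finally have "OPT ?V ?E \<le> card C0 - 1" .
    moreover have "card C0 > 0" using rC0 finC[of C0] C0 unfolding min_vertex_cover_def card_gt_0_iff by blast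
    ultimately show ?thesis using C0 by (simp add: min_vertex_cover_def)
  qed
  have M1: "min_vertex_cover V E (C \<union> {r})" if "min_vertex_cover ?V ?E C" for C
  proof -
    have vc: "vertex_cover ?V ?E C" using that min_vertex_cover_def by blast
    have "card (C \<union> {r}) = OPT ?V ?E + 1" using that finC'[OF vc] rnot[OF vc]
      by (simp add: min_vertex_cover_def)
    moreover have "OPT V E \<le> card (C \<union> {r})" using opt_le[OF fin cov2[OF vc]] .
    ultimately show ?thesis using le1 cov2[OF vc] by (simp add: min_vertex_cover_def)
  qed
  have le2: "OPT V E \<le> OPT ?V ?E + 1"
  proof -
    obtain D where D: "min_vertex_cover ?V ?E D" using opt_ex[OF fin' cov1[OF C0[unfolded min_vertex_cover_def, THEN conjunct1]]] by blast
    hence vc: "vertex_cover ?V ?E D" by (simp add: min_vertex_cover_def)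
    have "OPT V E \<le> card (D \<union> {r})" using opt_le[OF fin cov2[OF vc]] .
    also have "\<dots> = OPT ?V ?E + 1" using D finC'[OF vc] rnot[OF vc] by (simp add: min_vertex_cover_def)
    finally show ?thesis .
  qed
  have M2: "min_vertex_cover ?V ?E (C - {r})" if "min_vertex_cover V E C" for C
  proof -
    have vc: "vertex_cover V E C" and rC: "r \<in> C" using that assms(3) min_vertex_cover_def by blast+
    have "card (C - {r}) = OPT V E - 1" using that rC by (simp add: min_vertex_cover_def)
    moreover have "OPT ?V ?E \<le> card (C - {r})" using opt_le[OF fin' cov1[OF vc]] .
    ultimately show ?thesis using le1 le2 cov1[OF vc] by (simp add: min_vertex_cover_def)
  qed
  have YV: "Y \<subseteq> V" and nb: "\<not> (\<exists>C. min_vertex_cover V E C \<and> Y \<subseteq> C)"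
    and mn: "\<forall>Z. Z \<subset> Y \<longrightarrow> \<not> blocking_set V E Z"
    using assms(4) by (auto simp: minimal_blocking_set_def blocking_set_def)
  have rY: "r \<notin> Y"
  proof
    assume "r \<in> Y"
    hence "Y - {r} \<subset> Y" by blast
    hence "\<not> blocking_set V E (Y - {r})" using mn by blast
    then obtain C where "min_vertex_cover V E C" "Y - {r} \<subseteq> C" using YV
      by (auto simp: blocking_set_def)
    moreover hence "r \<in> C" using assms(3) by blast
    ultimately show False using nb by blast
  qed
  have B: "blocking_set ?V ?E Y"
    unfolding blocking_set_def
  proof
    show "Y \<subseteq> ?V" using YV rY by (auto simp: del_vert_V_def)
    show "\<not> (\<exists>C. min_vertex_cover ?V ?E C \<and> Y \<subseteq> C)"
      using M1 nb by blast
  qed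
  have "\<not> blocking_set ?V ?E Z" if "Z \<subset> Y" for Z
  proof -
    have "\<not> blocking_set V E Z" using mn that by blast
    moreover have "Z \<subseteq> V" using that YV by blast
    ultimately obtain C where "min_vertex_cover V E C" "Z \<subseteq> C" by (auto simp: blocking_set_def)
    hence "min_vertex_cover ?V ?E (C - {r})" "Z \<subseteq> C - {r}" using M2 rY that by blast+
    thus ?thesis by (auto simp: blocking_set_def)
  qed
  thus ?thesis using B by (simp add: minimal_blocking_set_def)
qed

end
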